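(* Let $\mathcal H$ be a complex separable Hilbert space, let $\mathcal A=(A_n)_{n\ge0}$ be a sequence of positive invertible bounded operators on $\mathcal H$ with $\sup_n\|A_n\|<\infty$, and suppose the operator-valued weighted shift $W_{\mathcal A}$ on $\ell^2(\mathcal H)$ is quadratically hyponormal. If $A_n=A_{n+1}=A_{n+2}$ for some $n\ge0$, then $A_k=A_n$ for every $k\ge1$.
   Context: $\ell^2(\mathcal H)=\{(x_n)_{n\ge0}: x_n\in\mathcal H,\ \sum_n\|x_n\|^2<\infty\}$; the operator-valued weighted shift is $W_{\mathcal A}(x_0,x_1,\dots)=(0,A_0x_0,A_1x_1,\dots)$. A bounded operator $T$ is hyponormal if $T^*T-TT^*\ge0$, and quadratically hyponormal if $T+\lambda T^2$ is hyponormal for every $\lambda\in\mathbb C$. *)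

theory Defs
  imports "HOL-Analysis.Analysis"
begin

class complex_vector = real_vector +
  fixes scaleC :: "complex \<Rightarrow> 'a \<Rightarrow> 'a" (infixr \<open>*\<^sub>C\<close> 75)
  assumes scaleC_add_right: "a *\<^sub>C (x + y) = a *\<^sub>C x + a *\<^sub>C y"
    and scaleC_add_left: "(a + b) *\<^sub>C x = a *\<^sub>C x + b *\<^sub>C x"
    and scaleC_scaleC: "a *\<^sub>C (b *\<^sub>C x) = (a * b) *\<^sub>C x"
    and scaleC_one: "1 *\<^sub>C x = x"
    and scaleR_scaleC: "scaleR r x = complex_of_real r *\<^sub>C x"

class complex_inner = complex_vector + real_normed_vector +
  fixes cinner :: "'a \<Rightarrow> 'a \<Rightarrow> complex"
  assumes cinner_commute: "cinner x y = cnj (cinner y x)"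
    and cinner_add_left: "cinner (x + y) z = cinner x z + cinner y z"
    and cinner_scaleC_left: "cinner (r *\<^sub>C x) y = cnj r * cinner x y"
    and cinner_ge_zero: "0 \<le> Re (cinner x x)"
    and cinner_eq_zero_iff: "cinner x x = 0 \<longleftrightarrow> x = 0"
    and norm_eq_sqrt_cinner: "norm x = sqrt (Re (cinner x x))"

class chilbert_space = complex_inner + complete_space

definition bounded_clinear :: "('a::complex_inner \<Rightarrow> 'b::complex_inner) \<Rightarrow> bool" where
  "bounded_clinear T \<longleftrightarrow>
     (\<forall>x y. T (x + y) = T x + T y) \<and> (\<forall>c x. T (c *\<^sub>C x) = c *\<^sub>C T x) \<and>
     (\<exists>K. \<forall>x. norm (T x) \<le> norm x * K)"

definition positive_op :: "('a::complex_inner \<Rightarrow> 'a) \<Rightarrow> bool" where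
  "positive_op A \<longleftrightarrow> bounded_clinear A \<and>
     (\<forall>x. Im (cinner (A x) x) = 0 \<and> Re (cinner (A x) x) \<ge> 0)"

definition invertible_op :: "('a::complex_inner \<Rightarrow> 'a) \<Rightarrow> bool" where
  "invertible_op A \<longleftrightarrow> bounded_clinear A \<and>
     (\<exists>B. bounded_clinear B \<and> (\<forall>x. B (A x) = x) \<and> (\<forall>x. A (B x) = x))"

definition ell2 :: "(nat \<Rightarrow> 'h::complex_inner) set" where
  "ell2 = {x. summable (\<lambda>n. (norm (x n))\<^sup>2)}"

definition l2inner :: "(nat \<Rightarrow> 'h::complex_inner) \<Rightarrow> (nat \<Rightarrow> 'h) \<Rightarrow> complex" where
  "l2inner x y = (\<Sum>n. cinner (x n) (y n))"

definition l2norm :: "(nat \<Rightarrow> 'h::complex_inner) \<Rightarrow> real" where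
  "l2norm x = sqrt (\<Sum>n. (norm (x n))\<^sup>2)"

definition l2_bounded :: "((nat \<Rightarrow> 'h::complex_inner) \<Rightarrow> (nat \<Rightarrow> 'h)) \<Rightarrow> bool" where
  "l2_bounded T \<longleftrightarrow>
     (\<forall>x\<in>ell2. T x \<in> ell2) \<and>
     (\<forall>x\<in>ell2. \<forall>y\<in>ell2. T (\<lambda>n. x n + y n) = (\<lambda>n. T x n + T y n)) \<and>
     (\<forall>c. \<forall>x\<in>ell2. T (\<lambda>n. c *\<^sub>C x n) = (\<lambda>n. c *\<^sub>C T x n)) \<and>
     (\<exists>K. \<forall>x\<in>ell2. l2norm (T x) \<le> K * l2norm x)"

definition l2_adjoint :: "((nat \<Rightarrow> 'h::complex_inner) \<Rightarrow> (nat \<Rightarrow> 'h)) \<Rightarrow> ((nat \<Rightarrow> 'h) \<Rightarrow> (nat \<Rightarrow> 'h))" where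
  "l2_adjoint T = (SOME S. (\<forall>y\<in>ell2. S y \<in> ell2) \<and>
      (\<forall>x\<in>ell2. \<forall>y\<in>ell2. l2inner (T x) y = l2inner x (S y)))"

definition l2_positive :: "((nat \<Rightarrow> 'h::complex_inner) \<Rightarrow> (nat \<Rightarrow> 'h)) \<Rightarrow> bool" where
  "l2_positive S \<longleftrightarrow> (\<forall>x\<in>ell2. Im (l2inner (S x) x) = 0 \<and> Re (l2inner (S x) x) \<ge> 0)"

definition l2_hyponormal :: "((nat \<Rightarrow> 'h::complex_inner) \<Rightarrow> (nat \<Rightarrow> 'h)) \<Rightarrow> bool" where
  "l2_hyponormal T \<longleftrightarrow> l2_bounded T \<and>
     l2_positive (\<lambda>x n. l2_adjoint T (T x) n - T (l2_adjoint T x) n)"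

definition l2_quad_hyponormal :: "((nat \<Rightarrow> 'h::complex_inner) \<Rightarrow> (nat \<Rightarrow> 'h)) \<Rightarrow> bool" where
  "l2_quad_hyponormal T \<longleftrightarrow> l2_bounded T \<and>
     (\<forall>lam::complex. l2_hyponormal (\<lambda>x n. T x n + lam *\<^sub>C T (T x) n))"

definition op_weighted_shift :: "(nat \<Rightarrow> 'h \<Rightarrow> 'h) \<Rightarrow> (nat \<Rightarrow> 'h::complex_inner) \<Rightarrow> (nat \<Rightarrow> 'h)" where
  "op_weighted_shift A x = (\<lambda>n. case n of 0 \<Rightarrow> 0 | Suc k \<Rightarrow> A k (x k))"

end

theory Submission
  imports Defs
begin

lemma cinner_add_right: "cinner x (y + z) = cinner x y + cinner (x::'a::complex_inner) z"
  apply (subst (1 2 3) cinner_commute) by (simp add: cinner_add_left)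

lemma cinner_scaleC_right: "cinner x (r *\<^sub>C y) = r * cinner (x::'a::complex_inner) y"
  apply (subst (1 2) cinner_commute) by (simp add: cinner_scaleC_left)

lemma cinner_zero_left[simp]: "cinner 0 (y::'a::complex_inner) = 0"
proof -
  have "cinner 0 y = cinner 0 y + cinner 0 y" using cinner_add_left[of 0 0 y] by simp
  thus ?thesis by simp
qed

lemma cinner_zero_right[simp]: "cinner (x::'a::complex_inner) 0 = 0"
proof -
  have "cinner x 0 = cinner x 0 + cinner x 0" using cinner_add_right[of x 0 0] by simp
  thus ?thesis by simp
qed

lemma cinner_minus_left: "cinner (- x) (y::'a::complex_inner) = - cinner x y"
proof -
  have "cinner x y + cinner (-x) y = 0" using cinner_add_left[of x "-x" y] by simp
  thus ?thesis by (simp add: add_eq_0_iff)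
qed

lemma cinner_minus_right: "cinner x (- y::'a::complex_inner) = - cinner x y"
proof -
  have "cinner x y + cinner x (-y) = 0" using cinner_add_right[of x y "-y"] by simp
  thus ?thesis by (simp add: add_eq_0_iff)
qed

lemma cinner_diff_left: "cinner (x - z) (y::'a::complex_inner) = cinner x y - cinner z y"
  unfolding diff_conv_add_uminus by (simp only: cinner_add_left cinner_minus_left)

lemma cinner_diff_right: "cinner x (y - z::'a::complex_inner) = cinner x y - cinner x z"
  unfolding diff_conv_add_uminus by (simp only: cinner_add_right cinner_minus_right)

lemma cinner_scaleR_left: "cinner (r *\<^sub>R x) (y::'a::complex_inner) = complex_of_real r * cinner x y"
  by (simp add: scaleR_scaleC cinner_scaleC_left)

lemma cinner_scaleR_right: "cinner x (r *\<^sub>R y::'a::complex_inner) = complex_of_real r * cinner x y"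
  by (simp add: scaleR_scaleC cinner_scaleC_right)

lemma Im_cinner_self: "Im (cinner x (x::'a::complex_inner)) = 0"
  using arg_cong[OF cinner_commute[of x x], of Im] by simp

lemma Re_cinner_commute: "Re (cinner x (y::'a::complex_inner)) = Re (cinner y x)"
  using arg_cong[OF cinner_commute[of x y], of Re] by simp

lemma norm_sq_cinner: "(norm (x::'a::complex_inner))\<^sup>2 = Re (cinner x x)"
  by (simp add: norm_eq_sqrt_cinner cinner_ge_zero)

lemma cinner_self_eq: "cinner x (x::'a::complex_inner) = complex_of_real ((norm x)\<^sup>2)"
  by (simp add: norm_sq_cinner complex_eq_iff Im_cinner_self)

lemma norm_add_sq: "(norm (x + y::'a::complex_inner))\<^sup>2 = (norm x)\<^sup>2 + (norm y)\<^sup>2 + 2 * Re (cinner x y)"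
  by (simp add: norm_sq_cinner cinner_add_left cinner_add_right Re_cinner_commute[of y x])

lemma norm_diff_sq: "(norm (x - y::'a::complex_inner))\<^sup>2 = (norm x)\<^sup>2 + (norm y)\<^sup>2 - 2 * Re (cinner x y)"
  by (simp add: norm_sq_cinner cinner_diff_left cinner_diff_right Re_cinner_commute[of y x])

lemma norm_scaleC': "norm (c *\<^sub>C (x::'a::complex_inner)) = cmod c * norm x"
proof -
  have "cinner (c *\<^sub>C x) (c *\<^sub>C x) = (cnj c * c) * cinner x x"
    by (simp add: cinner_scaleC_left cinner_scaleC_right)
  also have "cnj c * c = complex_of_real ((cmod c)\<^sup>2)"
    by (metis complex_norm_square mult.commute of_real_power)
  finally have "Re (cinner (c *\<^sub>C x) (c *\<^sub>C x)) = (cmod c)\<^sup>2 * Re (cinner x x)"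
    by simp
  hence "(norm (c *\<^sub>C x))\<^sup>2 = (cmod c)\<^sup>2 * (norm x)\<^sup>2"
    by (simp only: norm_sq_cinner)
  also have "\<dots> = (cmod c * norm x)\<^sup>2" by (simp add: power_mult_distrib)
  finally show ?thesis by (simp add: power2_eq_iff_nonneg)
qed

lemma Re_cinner_le: "2 * r * Re (cinner x (y::'a::complex_inner)) \<le> (norm x)\<^sup>2 + r\<^sup>2 * (norm y)\<^sup>2"
proof -
  have "0 \<le> (norm (x - r *\<^sub>R y))\<^sup>2" by simp
  thus ?thesis by (simp add: norm_diff_sq cinner_scaleR_right power_mult_distrib)
qed

lemma cmod_cinner_le: "cmod (cinner x (y::'a::complex_inner)) \<le> (norm x)\<^sup>2 + (norm y)\<^sup>2"
proof -
  have 1: "2 * Re (cinner x y) \<le> (norm x)\<^sup>2 + (norm y)\<^sup>2" using Re_cinner_le[of 1 x y] by simp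
  have 2: "2 * (-1) * Re (cinner x y) \<le> (norm x)\<^sup>2 + (norm y)\<^sup>2" using Re_cinner_le[of "-1" x y] by simp
  have "cinner x (\<i> *\<^sub>C y) = \<i> * cinner x y" by (simp add: cinner_scaleC_right)
  have 3: "2 * Re (cinner x (\<i> *\<^sub>C y)) \<le> (norm x)\<^sup>2 + (norm (\<i> *\<^sub>C y))\<^sup>2" using Re_cinner_le[of 1 x] by simp
  have 4: "2 * (-1) * Re (cinner x (\<i> *\<^sub>C y)) \<le> (norm x)\<^sup>2 + (norm (\<i> *\<^sub>C y))\<^sup>2" using Re_cinner_le[of "-1" x] by simp
  have n: "norm (\<i> *\<^sub>C y) = norm y" by (simp add: norm_scaleC')
  have "cmod (cinner x y) \<le> \<bar>Re (cinner x y)\<bar> + \<bar>Im (cinner x y)\<bar>" by (rule cmod_le)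
  have r: "Re (cinner x (\<i> *\<^sub>C y)) = - Im (cinner x y)" by (simp add: cinner_scaleC_right)
  have "\<bar>Re (cinner x y)\<bar> \<le> ((norm x)\<^sup>2 + (norm y)\<^sup>2) / 2" using 1 2 by (simp add: abs_le_iff)
  moreover have "\<bar>Im (cinner x y)\<bar> \<le> ((norm x)\<^sup>2 + (norm y)\<^sup>2) / 2" using 3 4 n r by (simp add: abs_le_iff)
  ultimately have "cmod (cinner x y) \<le> ((norm x)\<^sup>2 + (norm y)\<^sup>2) / 2 + ((norm x)\<^sup>2 + (norm y)\<^sup>2) / 2"
    using \<open>cmod (cinner x y) \<le> _\<close> by (meson add_mono order_trans)
  thus ?thesis by simp
qed

lemma bcl_add: "bounded_clinear T \<Longrightarrow> T (x + y) = T x + T y"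
  by (simp add: bounded_clinear_def)
lemma bcl_scaleC: "bounded_clinear T \<Longrightarrow> T (c *\<^sub>C x) = c *\<^sub>C T x"
  by (simp add: bounded_clinear_def)
lemma bcl_scaleR: "bounded_clinear T \<Longrightarrow> T (r *\<^sub>R x) = r *\<^sub>R T x"
  by (simp add: bounded_clinear_def scaleR_scaleC)
lemma bcl_zero: "bounded_clinear T \<Longrightarrow> T 0 = 0"
  using bcl_scaleR[of T 0 0] by simp
lemma bcl_minus: "bounded_clinear T \<Longrightarrow> T (- x) = - T x"
  using bcl_scaleR[of T "-1" x] by simp
lemma bcl_diff: "bounded_clinear T \<Longrightarrow> T (x - y) = T x - T y"
  using bcl_add[of T x "-y"] bcl_minus[of T y] by simp
lemma bcl_bound: "bounded_clinear T \<Longrightarrow> \<exists>K>0. \<forall>x. norm (T x) \<le> K * norm x"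
proof -
  assume "bounded_clinear T"
  then obtain K where K: "\<forall>x. norm (T x) \<le> norm x * K" by (auto simp: bounded_clinear_def)
  have "norm (T x) \<le> max K 1 * norm x" for x
  proof -
    have "norm x * K \<le> norm x * max K 1" by (rule mult_left_mono) auto
    thus ?thesis using K[rule_format, of x] by (simp add: mult.commute)
  qed
  thus ?thesis by (intro exI[of _ "max K 1"]) auto
qed
lemma bcl_bounded_linear: "bounded_clinear T \<Longrightarrow> bounded_linear T"
proof -
  assume a: "bounded_clinear T"
  then obtain K where K: "\<forall>x. norm (T x) \<le> norm x * K" by (auto simp: bounded_clinear_def)
  show ?thesis
    by (rule bounded_linear_intro[where K=K]) (use a K bcl_add bcl_scaleR in auto)
qed

lemma pos_bcl: "positive_op A \<Longrightarrow> bounded_clinear A"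
  by (simp add: positive_op_def)

lemma pos_Re_ge: "positive_op A \<Longrightarrow> 0 \<le> Re (cinner (A x) x)"
  by (simp add: positive_op_def)

lemma pos_selfadj:
  assumes "positive_op A" shows "cinner (A x) y = cinner x (A y)"
proof -
  have bl: "bounded_clinear A" using assms by (simp add: positive_op_def)
  have d: "cinner (A u) u = cinner u (A u)" for u
  proof -
    have "Im (cinner (A u) u) = 0" using assms by (simp add: positive_op_def)
    hence "cnj (cinner (A u) u) = cinner (A u) u" by (simp add: complex_eq_iff)
    thus ?thesis by (metis cinner_commute)
  qed
  have "cinner (A (x+y)) (x+y) = cinner (x+y) (A (x+y))" by (rule d)
  hence E1: "cinner (A x) y + cinner (A y) x = cinner x (A y) + cinner y (A x)"
    using d[of x] d[of y] apply (simp only: bcl_add[OF bl] cinner_add_left cinner_add_right)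
    by (simp add: algebra_simps)
  have "cinner (A (x + \<i> *\<^sub>C y)) (x + \<i> *\<^sub>C y) = cinner (x + \<i> *\<^sub>C y) (A (x + \<i> *\<^sub>C y))" by (rule d)
  hence "\<i> * (cinner (A x) y - cinner (A y) x) = \<i> * (cinner x (A y) - cinner y (A x))"
    using d[of x] d[of y]
    apply (simp only: bcl_add[OF bl] bcl_scaleC[OF bl] cinner_add_left cinner_add_right
        cinner_scaleC_left cinner_scaleC_right)
    by (simp add: algebra_simps)
  hence E2: "cinner (A x) y - cinner (A y) x = cinner x (A y) - cinner y (A x)" by simp
  have "(cinner (A x) y + cinner (A y) x) + (cinner (A x) y - cinner (A y) x) = (cinner x (A y) + cinner y (A x)) + (cinner x (A y) - cinner y (A x))"
    using E1 E2 by simp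
  thus ?thesis by simp
qed

lemma pos_CS:
  fixes C :: "'a::complex_inner \<Rightarrow> 'a"
  assumes pC: "positive_op C" and M: "M > 0" "\<forall>x. norm (C x) \<le> M * norm x"
  shows "(norm (C x))\<^sup>2 \<le> M * Re (cinner (C x) x)"
proof -
  have bl: "bounded_clinear C" using pC by (rule pos_bcl)
  define z where "z = C x"
  define s where "s = 1 / M"
  have Cz: "Re (cinner (C z) z) \<le> M * (norm z)\<^sup>2"
  proof -
    have "2 * M * Re (cinner (C z) z) \<le> (norm (C z))\<^sup>2 + M\<^sup>2 * (norm z)\<^sup>2" by (rule Re_cinner_le)
    also have "(norm (C z))\<^sup>2 \<le> (M * norm z)\<^sup>2"
      using M(2) by (simp add: power_mono)
    finally have "2 * M * Re (cinner (C z) z) \<le> 2 * M * (M * (norm z)\<^sup>2)"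
      by (simp add: power_mult_distrib power2_eq_square)
    thus ?thesis using M(1) by simp
  qed
  have "0 \<le> Re (cinner (C (x - s *\<^sub>R z)) (x - s *\<^sub>R z))" using pos_Re_ge[OF pC] .
  also have "cinner (C (x - s *\<^sub>R z)) (x - s *\<^sub>R z) =
     cinner (C x) x - s * cinner (C x) z - s * cinner (C z) x + s\<^sup>2 * cinner (C z) z"
    by (simp add: bcl_diff[OF bl] bcl_scaleR[OF bl] cinner_diff_left cinner_diff_right
        cinner_scaleR_left cinner_scaleR_right algebra_simps power2_eq_square)
  also have "cinner (C z) x = cinner z (C x)" by (rule pos_selfadj[OF pC])
  finally have "0 \<le> Re (cinner (C x) x) - 2 * s * (norm z)\<^sup>2 + s\<^sup>2 * Re (cinner (C z) z)"
    by (simp add: z_def norm_sq_cinner)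
  also have "\<dots> \<le> Re (cinner (C x) x) - 2 * s * (norm z)\<^sup>2 + s\<^sup>2 * (M * (norm z)\<^sup>2)"
    using Cz by (simp add: mult_left_mono)
  also have "\<dots> = Re (cinner (C x) x) - (norm z)\<^sup>2 / M"
    using M(1) by (simp add: s_def field_simps power2_eq_square)
  finally show ?thesis using M(1) by (simp add: z_def field_simps)
qed

lemma pos_contr:
  fixes C :: "'a::complex_inner \<Rightarrow> 'a"
  assumes pC: "positive_op C" and M: "M > 0" "\<forall>x. norm (C x) \<le> M * norm x"
  shows "(norm (M *\<^sub>R x - C x))\<^sup>2 \<le> M\<^sup>2 * (norm x)\<^sup>2"
proof -
  have a: "(norm (C x))\<^sup>2 \<le> M * Re (cinner (C x) x)" by (rule pos_CS[OF assms])
  have r: "Re (cinner x (C x)) = Re (cinner (C x) x)" by (rule Re_cinner_commute)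
  have p: "0 \<le> Re (cinner (C x) x)" by (rule pos_Re_ge[OF pC])
  have e1: "(norm (M *\<^sub>R x - C x))\<^sup>2 = (norm (M *\<^sub>R x))\<^sup>2 + (norm (C x))\<^sup>2 - 2 * Re (cinner (M *\<^sub>R x) (C x))"
    by (rule norm_diff_sq)
  have e2: "(norm (M *\<^sub>R x))\<^sup>2 = M\<^sup>2 * (norm x)\<^sup>2" using M(1) by (simp add: power_mult_distrib)
  have e3: "Re (cinner (M *\<^sub>R x) (C x)) = M * Re (cinner (C x) x)"
    by (simp add: cinner_scaleR_left r)
  have "0 \<le> M * Re (cinner (C x) x)" using M(1) p by simp
  thus ?thesis using a unfolding e1 e2 e3 by linarith
qed

lemma sqrt_unique:
  fixes B C :: "'a::complex_inner \<Rightarrow> 'a"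
  assumes pB: "positive_op B" and pC: "positive_op C" and iB: "invertible_op B"
    and eq: "\<And>x. B (B x) = C (C x)"
  shows "B = C"
proof -
  have blB: "bounded_clinear B" using pB by (rule pos_bcl)
  have blC: "bounded_clinear C" using pC by (rule pos_bcl)
  obtain Bi where Bi: "bounded_clinear Bi" "\<forall>x. Bi (B x) = x" using iB by (auto simp: invertible_op_def)
  obtain K1 where K1: "K1 > 0" "\<forall>x. norm (Bi x) \<le> K1 * norm x" using bcl_bound[OF Bi(1)] by auto
  obtain M where M: "M > 0" "\<forall>x. norm (C x) \<le> M * norm x" using bcl_bound[OF blC] by auto
  define c where "c = 1 / K1\<^sup>2"
  have c: "c > 0" using K1 by (simp add: c_def)
  have lowB: "c * (norm v)\<^sup>2 \<le> (norm (B v))\<^sup>2" for v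
  proof -
    have "norm v \<le> K1 * norm (B v)" using K1(2)[rule_format, of "B v"] Bi(2) by simp
    hence "(norm v)\<^sup>2 \<le> (K1 * norm (B v))\<^sup>2" by (simp add: power_mono)
    thus ?thesis using K1(1) by (simp add: c_def field_simps power_mult_distrib)
  qed
  define D where "D = (\<lambda>x. C x - B x)"
  have blD: "bounded_linear D" unfolding D_def
    by (intro bounded_linear_sub bcl_bounded_linear blB blC)
  define K where "K = onorm D"
  have K0: "0 \<le> K" unfolding K_def by (rule onorm_pos_le[OF blD])
  have DK: "norm (D x) \<le> K * norm x" for x unfolding K_def by (rule onorm[OF blD])
  have BD: "B (D x) = - D (C x)" for x
    using eq[of x] by (simp add: D_def bcl_diff[OF blB])
  have key: "M *\<^sub>R D x + B (D x) = D (M *\<^sub>R x - C x)" for x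
    using BD[of x] by (simp add: D_def bcl_diff[OF blB] bcl_diff[OF blC] bcl_scaleR[OF blB] bcl_scaleR[OF blC] algebra_simps)
  have low: "(M\<^sup>2 + c) * (norm v)\<^sup>2 \<le> (norm (M *\<^sub>R v + B v))\<^sup>2" for v
  proof -
    have e1: "(norm (M *\<^sub>R v + B v))\<^sup>2 = (norm (M *\<^sub>R v))\<^sup>2 + (norm (B v))\<^sup>2 + 2 * Re (cinner (M *\<^sub>R v) (B v))"
      by (rule norm_add_sq)
    have e2: "(norm (M *\<^sub>R v))\<^sup>2 = M\<^sup>2 * (norm v)\<^sup>2" using M(1) by (simp add: power_mult_distrib)
    have e3: "Re (cinner (M *\<^sub>R v) (B v)) = M * Re (cinner v (B v))"
      by (simp add: cinner_scaleR_left)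
    have "0 \<le> Re (cinner v (B v))"
      using pos_Re_ge[OF pB, of v] by (simp add: Re_cinner_commute)
    hence "0 \<le> M * Re (cinner v (B v))" using M(1) by simp
    moreover have "(M\<^sup>2 + c) * (norm v)\<^sup>2 = M\<^sup>2 * (norm v)\<^sup>2 + c * (norm v)\<^sup>2" by (simp add: distrib_right)
    ultimately show ?thesis using lowB[of v] unfolding e1 e2 e3 by linarith
  qed
  have bnd: "(norm (D x))\<^sup>2 \<le> (K\<^sup>2 * M\<^sup>2 / (M\<^sup>2 + c)) * (norm x)\<^sup>2" for x
  proof -
    have "(M\<^sup>2 + c) * (norm (D x))\<^sup>2 \<le> (norm (D (M *\<^sub>R x - C x)))\<^sup>2"
      using low[of "D x"] key[of x] by simp
    also have "\<dots> \<le> (K * norm (M *\<^sub>R x - C x))\<^sup>2"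
      using DK by (simp add: power_mono)
    also have "\<dots> = K\<^sup>2 * (norm (M *\<^sub>R x - C x))\<^sup>2" by (simp add: power_mult_distrib)
    also have "\<dots> \<le> K\<^sup>2 * (M\<^sup>2 * (norm x)\<^sup>2)"
      using pos_contr[OF pC M] by (simp add: mult_left_mono)
    finally have "(M\<^sup>2 + c) * (norm (D x))\<^sup>2 \<le> K\<^sup>2 * (M\<^sup>2 * (norm x)\<^sup>2)" .
    moreover have pos: "M\<^sup>2 + c > 0" using c by (metis add_pos_nonneg add.commute zero_le_power2)
    ultimately have "(norm (D x))\<^sup>2 \<le> (K\<^sup>2 * (M\<^sup>2 * (norm x)\<^sup>2)) / (M\<^sup>2 + c)"
      by (simp add: pos_le_divide_eq mult.commute)
    thus ?thesis by (simp add: mult.assoc)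
  qed
  define b where "b = sqrt (K\<^sup>2 * M\<^sup>2 / (M\<^sup>2 + c))"
  have pos: "M\<^sup>2 + c > 0" using c by (metis add_pos_nonneg add.commute zero_le_power2)
  have arg0: "0 \<le> K\<^sup>2 * M\<^sup>2 / (M\<^sup>2 + c)" using pos by simp
  have b0: "0 \<le> b" unfolding b_def using arg0 by (rule real_sqrt_ge_zero)
  have bsq: "b\<^sup>2 = K\<^sup>2 * M\<^sup>2 / (M\<^sup>2 + c)" unfolding b_def
    using arg0 by (rule real_sqrt_pow2)
  have "norm (D x) \<le> b * norm x" for x
  proof -
    have "(b * norm x)\<^sup>2 = b\<^sup>2 * (norm x)\<^sup>2" by (rule power_mult_distrib)
    hence "(norm (D x))\<^sup>2 \<le> (b * norm x)\<^sup>2" using bnd[of x] unfolding bsq by simp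
    thus ?thesis by (rule power2_le_imp_le) (use b0 in simp)
  qed
  hence "K \<le> b" unfolding K_def by (intro onorm_bound b0) auto
  hence "K\<^sup>2 \<le> b\<^sup>2" using K0 by (simp add: power_mono)
  hence "K\<^sup>2 * (M\<^sup>2 + c) \<le> K\<^sup>2 * M\<^sup>2" using pos unfolding bsq by (simp add: pos_le_divide_eq)
  hence "K\<^sup>2 * c \<le> 0" by (simp add: distrib_left)
  hence "K = 0" using c K0 by (simp add: mult_le_0_iff)
  hence "\<forall>x. D x = 0" using onorm_eq_0[OF blD] K_def by simp
  thus ?thesis by (auto simp: D_def fun_eq_iff)
qed

lemma ell2_iff: "x \<in> ell2 \<longleftrightarrow> summable (\<lambda>n. (norm (x n))\<^sup>2)"
  by (simp add: ell2_def)

lemma ell2_le: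
  fixes u v w :: "nat \<Rightarrow> 'h::complex_inner"
  assumes u: "u \<in> ell2" and v: "v \<in> ell2" and a: "a \<ge> 0" and b: "b \<ge> 0"
    and le: "\<And>n. norm (w n) \<le> a * norm (u n) + b * norm (v n)"
  shows "w \<in> ell2"
proof -
  have "summable (\<lambda>n. 2 * a\<^sup>2 * (norm (u n))\<^sup>2 + 2 * b\<^sup>2 * (norm (v n))\<^sup>2)"
    using u v by (intro summable_add summable_mult) (auto simp: ell2_iff)
  moreover have "norm ((norm (w n))\<^sup>2) \<le> 2 * a\<^sup>2 * (norm (u n))\<^sup>2 + 2 * b\<^sup>2 * (norm (v n))\<^sup>2" for n
  proof -
    have "(norm (w n))\<^sup>2 \<le> (a * norm (u n) + b * norm (v n))\<^sup>2"
      using le[of n] by (simp add: power_mono)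
    also have "\<dots> \<le> 2 * a\<^sup>2 * (norm (u n))\<^sup>2 + 2 * b\<^sup>2 * (norm (v n))\<^sup>2"
    proof -
      have "0 \<le> (a * norm (u n) - b * norm (v n))\<^sup>2" by simp
      thus ?thesis by (simp add: power2_eq_square algebra_simps)
    qed
    finally show ?thesis by simp
  qed
  ultimately show ?thesis unfolding ell2_iff
    by (rule summable_comparison_test'[where N=0])
qed

lemma ell2_lin:
  fixes u v :: "nat \<Rightarrow> 'h::complex_inner"
  assumes "u \<in> ell2" "v \<in> ell2"
  shows "(\<lambda>n. u n + c *\<^sub>C v n) \<in> ell2"
  by (rule ell2_le[OF assms, of 1 "cmod c"]) (auto simp: norm_scaleC' intro: order_trans[OF norm_triangle_ineq])

lemma ell2_diff:
  fixes u v :: "nat \<Rightarrow> 'h::complex_inner"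
  assumes "u \<in> ell2" "v \<in> ell2"
  shows "(\<lambda>n. u n - v n) \<in> ell2"
  by (rule ell2_le[OF assms, of 1 1]) (auto intro: norm_triangle_ineq4)

lemma summable_cinner:
  fixes u v :: "nat \<Rightarrow> 'h::complex_inner"
  assumes u: "u \<in> ell2" and v: "v \<in> ell2"
  shows "summable (\<lambda>n. cinner (u n) (v n))"
proof (rule summable_comparison_test'[where N=0])
  show "summable (\<lambda>n. (norm (u n))\<^sup>2 + (norm (v n))\<^sup>2)"
    using u v by (intro summable_add) (auto simp: ell2_iff)
  show "norm (cinner (u n) (v n)) \<le> (norm (u n))\<^sup>2 + (norm (v n))\<^sup>2" for n
    by (simp add: cmod_cinner_le)
qed

lemma l2inner_lin_left:
  fixes u v y :: "nat \<Rightarrow> 'h::complex_inner"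
  assumes u: "u \<in> ell2" and v: "v \<in> ell2" and y: "y \<in> ell2"
  shows "l2inner (\<lambda>n. u n + c *\<^sub>C v n) y = l2inner u y + cnj c * l2inner v y"
proof -
  have s1: "summable (\<lambda>n. cinner (u n) (y n))" by (rule summable_cinner[OF u y])
  have s2: "summable (\<lambda>n. cinner (v n) (y n))" by (rule summable_cinner[OF v y])
  have "l2inner (\<lambda>n. u n + c *\<^sub>C v n) y = (\<Sum>n. cinner (u n) (y n) + cnj c * cinner (v n) (y n))"
    by (simp add: l2inner_def cinner_add_left cinner_scaleC_left)
  also have "\<dots> = (\<Sum>n. cinner (u n) (y n)) + (\<Sum>n. cnj c * cinner (v n) (y n))"
    by (rule suminf_add[symmetric]) (use s1 s2 summable_mult in auto)
  also have "(\<Sum>n. cnj c * cinner (v n) (y n)) = cnj c * (\<Sum>n. cinner (v n) (y n))"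
    by (rule suminf_mult[OF s2])
  finally show ?thesis by (simp add: l2inner_def)
qed

lemma l2inner_lin_right:
  fixes u v y :: "nat \<Rightarrow> 'h::complex_inner"
  assumes u: "u \<in> ell2" and v: "v \<in> ell2" and y: "y \<in> ell2"
  shows "l2inner y (\<lambda>n. u n + c *\<^sub>C v n) = l2inner y u + c * l2inner y v"
proof -
  have s1: "summable (\<lambda>n. cinner (y n) (u n))" by (rule summable_cinner[OF y u])
  have s2: "summable (\<lambda>n. cinner (y n) (v n))" by (rule summable_cinner[OF y v])
  have "l2inner y (\<lambda>n. u n + c *\<^sub>C v n) = (\<Sum>n. cinner (y n) (u n) + c * cinner (y n) (v n))"
    by (simp add: l2inner_def cinner_add_right cinner_scaleC_right)
  also have "\<dots> = (\<Sum>n. cinner (y n) (u n)) + (\<Sum>n. c * cinner (y n) (v n))"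
    by (rule suminf_add[symmetric]) (use s1 s2 summable_mult in auto)
  also have "(\<Sum>n. c * cinner (y n) (v n)) = c * (\<Sum>n. cinner (y n) (v n))"
    by (rule suminf_mult[OF s2])
  finally show ?thesis by (simp add: l2inner_def)
qed

lemma l2inner_diff_left:
  fixes u v y :: "nat \<Rightarrow> 'h::complex_inner"
  assumes u: "u \<in> ell2" and v: "v \<in> ell2" and y: "y \<in> ell2"
  shows "l2inner (\<lambda>n. u n - v n) y = l2inner u y - l2inner v y"
proof -
  have s1: "summable (\<lambda>n. cinner (u n) (y n))" by (rule summable_cinner[OF u y])
  have s2: "summable (\<lambda>n. cinner (v n) (y n))" by (rule summable_cinner[OF v y])
  show ?thesis unfolding l2inner_def cinner_diff_left by (rule suminf_diff[OF s1 s2, symmetric])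
qed

lemma l2inner_diff_right:
  fixes u v y :: "nat \<Rightarrow> 'h::complex_inner"
  assumes u: "u \<in> ell2" and v: "v \<in> ell2" and y: "y \<in> ell2"
  shows "l2inner y (\<lambda>n. u n - v n) = l2inner y u - l2inner y v"
proof -
  have s1: "summable (\<lambda>n. cinner (y n) (u n))" by (rule summable_cinner[OF y u])
  have s2: "summable (\<lambda>n. cinner (y n) (v n))" by (rule summable_cinner[OF y v])
  show ?thesis unfolding l2inner_def cinner_diff_right by (rule suminf_diff[OF s1 s2, symmetric])
qed

lemma l2inner_cnj:
  fixes u v :: "nat \<Rightarrow> 'h::complex_inner"
  assumes u: "u \<in> ell2" and v: "v \<in> ell2"
  shows "l2inner u v = cnj (l2inner v u)"
proof -
  have "(\<lambda>n. cinner (v n) (u n)) sums l2inner v u"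
    unfolding l2inner_def by (rule summable_sums[OF summable_cinner[OF v u]])
  hence "(\<lambda>n. cnj (cinner (v n) (u n))) sums cnj (l2inner v u)" by (simp add: sums_cnj)
  hence "(\<lambda>n. cinner (u n) (v n)) sums cnj (l2inner v u)"
    by (metis (no_types, lifting) cinner_commute sums_cong)
  thus ?thesis unfolding l2inner_def by (rule sums_unique[symmetric])
qed

lemma Re_l2inner_self:
  fixes u :: "nat \<Rightarrow> 'h::complex_inner"
  assumes u: "u \<in> ell2"
  shows "Re (l2inner u u) = (\<Sum>n. (norm (u n))\<^sup>2)"
proof -
  have "(\<lambda>n. cinner (u n) (u n)) sums l2inner u u"
    unfolding l2inner_def by (rule summable_sums[OF summable_cinner[OF u u]])
  hence "(\<lambda>n. Re (cinner (u n) (u n))) sums Re (l2inner u u)" by (simp add: sums_complex_iff)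
  hence "(\<lambda>n. (norm (u n))\<^sup>2) sums Re (l2inner u u)" by (simp add: norm_sq_cinner)
  thus ?thesis by (rule sums_unique)
qed

lemma l2inner_self_zero:
  fixes u :: "nat \<Rightarrow> 'h::complex_inner"
  assumes u: "u \<in> ell2" and z: "l2inner u u = 0"
  shows "u n = 0"
proof -
  have "(\<Sum>n. (norm (u n))\<^sup>2) = 0" using Re_l2inner_self[OF u] z by simp
  hence "\<forall>n. (norm (u n))\<^sup>2 = 0" using suminf_eq_zero_iff[of "\<lambda>n. (norm (u n))\<^sup>2"] u
    by (simp add: ell2_iff)
  thus ?thesis by simp
qed

definition adjpair :: "((nat \<Rightarrow> 'h::complex_inner) \<Rightarrow> (nat \<Rightarrow> 'h)) \<Rightarrow> ((nat \<Rightarrow> 'h) \<Rightarrow> (nat \<Rightarrow> 'h)) \<Rightarrow> bool" where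
  "adjpair T S \<longleftrightarrow> (\<forall>x\<in>ell2. T x \<in> ell2) \<and> (\<forall>y\<in>ell2. S y \<in> ell2) \<and>
     (\<forall>x\<in>ell2. \<forall>y\<in>ell2. l2inner (T x) y = l2inner x (S y))"

lemma adjpair_comp:
  "adjpair T1 S1 \<Longrightarrow> adjpair T2 S2 \<Longrightarrow> adjpair (\<lambda>x. T1 (T2 x)) (\<lambda>y. S2 (S1 y))"
  by (simp add: adjpair_def)

lemma adjpair_lin:
  fixes T1 S1 T2 S2 :: "(nat \<Rightarrow> 'h::complex_inner) \<Rightarrow> (nat \<Rightarrow> 'h)"
  assumes a1: "adjpair T1 S1" and a2: "adjpair T2 S2"
  shows "adjpair (\<lambda>x n. T1 x n + c *\<^sub>C T2 x n) (\<lambda>y n. S1 y n + cnj c *\<^sub>C S2 y n)"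
  unfolding adjpair_def
proof (intro conjI ballI)
  fix x :: "nat \<Rightarrow> 'h" assume x: "x \<in> ell2"
  show "(\<lambda>n. T1 x n + c *\<^sub>C T2 x n) \<in> ell2" using a1 a2 x by (intro ell2_lin) (auto simp: adjpair_def)
next
  fix y :: "nat \<Rightarrow> 'h" assume y: "y \<in> ell2"
  show "(\<lambda>n. S1 y n + cnj c *\<^sub>C S2 y n) \<in> ell2" using a1 a2 y by (intro ell2_lin) (auto simp: adjpair_def)
next
  fix x y :: "nat \<Rightarrow> 'h" assume x: "x \<in> ell2" and y: "y \<in> ell2"
  have "l2inner (\<lambda>n. T1 x n + c *\<^sub>C T2 x n) y = l2inner (T1 x) y + cnj c * l2inner (T2 x) y"
    using a1 a2 x y by (intro l2inner_lin_left) (auto simp: adjpair_def)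
  also have "\<dots> = l2inner x (S1 y) + cnj c * l2inner x (S2 y)"
    using a1 a2 x y by (auto simp: adjpair_def)
  also have "\<dots> = l2inner x (\<lambda>n. S1 y n + cnj c *\<^sub>C S2 y n)"
    using a1 a2 x y by (intro l2inner_lin_right[symmetric]) (auto simp: adjpair_def)
  finally show "l2inner (\<lambda>n. T1 x n + c *\<^sub>C T2 x n) y = l2inner x (\<lambda>n. S1 y n + cnj c *\<^sub>C S2 y n)" .
qed

definition Wsh :: "(nat \<Rightarrow> 'h \<Rightarrow> 'h) \<Rightarrow> (nat \<Rightarrow> 'h::complex_inner) \<Rightarrow> (nat \<Rightarrow> 'h)" where
  "Wsh A y = (\<lambda>k. A k (y (Suc k)))"

lemma W_ell2:
  fixes A :: "nat \<Rightarrow> 'h::complex_inner \<Rightarrow> 'h"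
  assumes M: "\<And>k x. norm (A k x) \<le> M * norm x" "0 \<le> M" and x: "x \<in> ell2"
  shows "op_weighted_shift A x \<in> ell2"
proof -
  have "summable (\<lambda>n. (norm (op_weighted_shift A x (Suc n)))\<^sup>2)"
  proof (rule summable_comparison_test'[where N=0])
    show "summable (\<lambda>n. M\<^sup>2 * (norm (x n))\<^sup>2)" using x by (intro summable_mult) (simp add: ell2_iff)
    show "norm ((norm (op_weighted_shift A x (Suc n)))\<^sup>2) \<le> M\<^sup>2 * (norm (x n))\<^sup>2" for n
    proof -
      have "(norm (A n (x n)))\<^sup>2 \<le> (M * norm (x n))\<^sup>2" using M by (simp add: power_mono)
      thus ?thesis by (simp add: op_weighted_shift_def power_mult_distrib)
    qed
  qed
  thus ?thesis using summable_Suc_iff[of "\<lambda>n. (norm (op_weighted_shift A x n))\<^sup>2"] by (simp add: ell2_iff)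
qed

lemma Wsh_ell2:
  fixes A :: "nat \<Rightarrow> 'h::complex_inner \<Rightarrow> 'h"
  assumes M: "\<And>k x. norm (A k x) \<le> M * norm x" "0 \<le> M" and y: "y \<in> ell2"
  shows "Wsh A y \<in> ell2"
proof -
  have "summable (\<lambda>n. (norm (Wsh A y n))\<^sup>2)"
  proof (rule summable_comparison_test'[where N=0])
    show "summable (\<lambda>n. M\<^sup>2 * (norm (y (Suc n)))\<^sup>2)" using y
      using summable_Suc_iff[of "\<lambda>n. (norm (y n))\<^sup>2"] by (intro summable_mult) (simp add: ell2_iff)
    show "norm ((norm (Wsh A y n))\<^sup>2) \<le> M\<^sup>2 * (norm (y (Suc n)))\<^sup>2" for n
    proof -
      have "(norm (A n (y (Suc n))))\<^sup>2 \<le> (M * norm (y (Suc n)))\<^sup>2" using M by (simp add: power_mono)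
      thus ?thesis by (simp add: Wsh_def power_mult_distrib)
    qed
  qed
  thus ?thesis by (simp add: ell2_iff)
qed

lemma W_adj:
  fixes A :: "nat \<Rightarrow> 'h::complex_inner \<Rightarrow> 'h"
  assumes pos: "\<And>k. positive_op (A k)"
    and M: "\<And>k x. norm (A k x) \<le> M * norm x" "0 \<le> M"
  shows "adjpair (op_weighted_shift A) (Wsh A)"
  unfolding adjpair_def
proof (intro conjI ballI)
  fix x :: "nat \<Rightarrow> 'h" assume "x \<in> ell2" thus "op_weighted_shift A x \<in> ell2" by (rule W_ell2[OF M])
next
  fix y :: "nat \<Rightarrow> 'h" assume "y \<in> ell2" thus "Wsh A y \<in> ell2" by (rule Wsh_ell2[OF M])
next
  fix x y :: "nat \<Rightarrow> 'h" assume x: "x \<in> ell2" and y: "y \<in> ell2"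
  define f where "f = (\<lambda>n. cinner (op_weighted_shift A x n) (y n))"
  have sf: "summable f" unfolding f_def by (rule summable_cinner[OF W_ell2[OF M x] y])
  have "(\<Sum>n. f (Suc n)) = suminf f - f 0" by (rule suminf_split_head[OF sf])
  moreover have "f 0 = 0" by (simp add: f_def op_weighted_shift_def)
  moreover have "f (Suc n) = cinner (x n) (Wsh A y n)" for n
    by (simp add: f_def op_weighted_shift_def Wsh_def pos_selfadj[OF pos])
  ultimately have "suminf f = (\<Sum>n. cinner (x n) (Wsh A y n))" by simp
  thus "l2inner (op_weighted_shift A x) y = l2inner x (Wsh A y)" by (simp add: l2inner_def f_def)
qed

lemma T_adj:
  fixes A :: "nat \<Rightarrow> 'h::complex_inner \<Rightarrow> 'h"
  assumes pos: "\<And>k. positive_op (A k)"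
    and M: "\<And>k x. norm (A k x) \<le> M * norm x" "0 \<le> M"
  shows "adjpair (\<lambda>x n. op_weighted_shift A x n + lam *\<^sub>C op_weighted_shift A (op_weighted_shift A x) n)
                 (\<lambda>y n. Wsh A y n + cnj lam *\<^sub>C Wsh A (Wsh A y) n)"
  using adjpair_lin[OF W_adj[OF pos M] adjpair_comp[OF W_adj[OF pos M] W_adj[OF pos M]], where c=lam] .

lemma adj_ident:
  fixes T S :: "(nat \<Rightarrow> 'h::complex_inner) \<Rightarrow> (nat \<Rightarrow> 'h)"
  assumes a: "adjpair T S" and y: "y \<in> ell2"
  shows "l2_adjoint T y = S y"
proof -
  define P where "P = (\<lambda>S'::(nat \<Rightarrow> 'h) \<Rightarrow> (nat \<Rightarrow> 'h). (\<forall>y\<in>ell2. S' y \<in> ell2) \<and>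
      (\<forall>x\<in>ell2. \<forall>y\<in>ell2. l2inner (T x) y = l2inner x (S' y)))"
  have "P S" using a by (simp add: P_def adjpair_def)
  have e: "l2_adjoint T = Eps P" unfolding l2_adjoint_def P_def by (rule refl)
  have P0: "P (l2_adjoint T)" unfolding e by (rule someI[of P S, OF \<open>P S\<close>])
  have S0y: "l2_adjoint T y \<in> ell2" using P0 y by (simp add: P_def)
  have Sy: "S y \<in> ell2" using a y by (simp add: adjpair_def)
  define d where "d = (\<lambda>n. l2_adjoint T y n - S y n)"
  have d: "d \<in> ell2" unfolding d_def by (rule ell2_diff[OF S0y Sy])
  have "l2inner d (l2_adjoint T y) = l2inner (T d) y" using P0 d y by (simp add: P_def)
  also have "\<dots> = l2inner d (S y)" using a d y by (simp add: adjpair_def)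
  finally have "l2inner d d = 0" unfolding d_def[of] using l2inner_diff_right[OF S0y Sy d[unfolded d_def]]
    by (simp add: d_def)
  hence "\<And>n. d n = 0" by (rule l2inner_self_zero[OF d])
  thus ?thesis by (auto simp: d_def fun_eq_iff)
qed

lemma hyp_ineq:
  fixes T S :: "(nat \<Rightarrow> 'h::complex_inner) \<Rightarrow> (nat \<Rightarrow> 'h)"
  assumes a: "adjpair T S" and h: "l2_hyponormal T" and x: "x \<in> ell2"
  shows "(\<Sum>n. (norm (S x n))\<^sup>2) \<le> (\<Sum>n. (norm (T x n))\<^sup>2)"
proof -
  have Tx: "T x \<in> ell2" and Sx: "S x \<in> ell2" using a x by (auto simp: adjpair_def)
  have STx: "S (T x) \<in> ell2" and TSx: "T (S x) \<in> ell2" using a Tx Sx by (auto simp: adjpair_def)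
  have "0 \<le> Re (l2inner (\<lambda>n. l2_adjoint T (T x) n - T (l2_adjoint T x) n) x)"
    using h x by (simp add: l2_hyponormal_def l2_positive_def)
  also have "(\<lambda>n. l2_adjoint T (T x) n - T (l2_adjoint T x) n) = (\<lambda>n. S (T x) n - T (S x) n)"
    using adj_ident[OF a Tx] adj_ident[OF a x] by simp
  also have "l2inner (\<lambda>n. S (T x) n - T (S x) n) x = l2inner (S (T x)) x - l2inner (T (S x)) x"
    by (rule l2inner_diff_left[OF STx TSx x])
  also have "l2inner (S (T x)) x = cnj (l2inner x (S (T x)))" by (rule l2inner_cnj[OF STx x])
  also have "l2inner x (S (T x)) = l2inner (T x) (T x)" using a x Tx by (simp add: adjpair_def)
  also have "l2inner (T (S x)) x = l2inner (S x) (S x)" using a x Sx by (simp add: adjpair_def)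
  finally have "0 \<le> Re (l2inner (T x) (T x)) - Re (l2inner (S x) (S x))" by simp
  thus ?thesis using Re_l2inner_self[OF Tx] Re_l2inner_self[OF Sx] by simp
qed

lemma of_real_scaleC: "complex_of_real r *\<^sub>C (v::'a::complex_vector) = r *\<^sub>R v"
  by (simp add: scaleR_scaleC)

lemma small_le:
  fixes d R :: real
  assumes "\<And>t. t > 0 \<Longrightarrow> d \<le> t\<^sup>2 * R"
  shows "d \<le> 0"
proof (rule ccontr)
  assume "\<not> d \<le> 0" hence d: "d > 0" by simp
  have "d \<le> 1\<^sup>2 * R" using assms[of 1] by simp
  hence R: "R > 0" using d by simp
  define t where "t = sqrt (d / (2 * R))"
  have t: "t > 0" using d R by (simp add: t_def)
  have "t\<^sup>2 = d / (2 * R)" using d R by (simp add: t_def)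
  hence "t\<^sup>2 * R = d / 2" using R by simp
  thus False using assms[OF t] d by simp
qed

lemma ell2_fin:
  assumes "finite N" "\<And>n. n \<notin> N \<Longrightarrow> x n = 0"
  shows "x \<in> ell2"
  unfolding ell2_iff by (rule summable_finite[OF assms(1)]) (simp add: assms(2))

lemma scaleC_zero_r[simp]: "c *\<^sub>C (0::'a::complex_vector) = 0"
proof -
  have "c *\<^sub>C (0::'a) = c *\<^sub>C 0 + c *\<^sub>C 0" using scaleC_add_right[of c "0::'a" 0] by simp
  thus ?thesis by simp
qed

lemma forward_step:
  fixes A :: "nat \<Rightarrow> 'h::complex_inner \<Rightarrow> 'h"
  assumes pos: "\<And>k. positive_op (A k)" and inv: "\<And>k. invertible_op (A k)"
    and M: "\<And>k x. norm (A k x) \<le> M * norm x" "0 \<le> M"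
    and hyp: "\<And>lam. l2_hyponormal (\<lambda>x n. op_weighted_shift A x n + lam *\<^sub>C op_weighted_shift A (op_weighted_shift A x) n)"
    and e1: "A (Suc n) = A n" and e2: "A (Suc (Suc n)) = A n"
  shows "A (Suc (Suc (Suc n))) = A n"
proof -
  define B where "B = A n"
  define C where "C = A (Suc (Suc (Suc n)))"
  define E where "E = A (Suc (Suc (Suc (Suc n))))"
  define F where "F = A (Suc (Suc (Suc (Suc (Suc n)))))"
  have bl: "bounded_clinear (A k)" for k using pos[of k] by (rule pos_bcl)
  have lin[simp]: "A k (v + w) = A k v + A k w" "A k (r *\<^sub>R v) = r *\<^sub>R A k v" "A k 0 = 0"
      "A k (- v) = - A k v" "A k (v - w) = A k v - A k w" for k v w r
    using bl[of k] by (simp_all add: bcl_add bcl_scaleR bcl_zero bcl_minus bcl_diff)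
  have key: "(norm (B (B (B a)) - C (C (B a))))\<^sup>2 \<le> t\<^sup>2 * (norm (F (E (C (B a)))))\<^sup>2" if t: "t > 0" for t a
  proof -
    define lam where "lam = complex_of_real t"
    define T where "T = (\<lambda>x n. op_weighted_shift A x n + lam *\<^sub>C op_weighted_shift A (op_weighted_shift A x) n)"
    define S where "S = (\<lambda>y n. Wsh A y n + cnj lam *\<^sub>C Wsh A (Wsh A y) n)"
    define x where "x = (\<lambda>k. if k = Suc (Suc n) then a else if k = Suc (Suc (Suc n)) then (- t) *\<^sub>R B a
       else if k = Suc (Suc (Suc (Suc n))) then (t * t) *\<^sub>R C (B a) else 0)"
    have adj: "adjpair T S" unfolding T_def S_def by (rule T_adj[OF pos M])
    have x2: "x \<in> ell2"
      by (rule ell2_fin[of "{Suc (Suc n), Suc (Suc (Suc n)), Suc (Suc (Suc (Suc n)))}"]) (auto simp: x_def)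
    have ineq: "(\<Sum>j. (norm (S x j))\<^sup>2) \<le> (\<Sum>j. (norm (T x j))\<^sup>2)"
      using hyp_ineq[OF adj _ x2] hyp unfolding T_def by blast
    have Tv: "T x j = (if j = Suc (Suc (Suc n)) then B a else if j = Suc (Suc (Suc (Suc (Suc (Suc n))))) then (t * t * t) *\<^sub>R F (E (C (B a))) else 0)" for j
    proof -
      consider "j = 0" | "j = Suc 0" | i where "j = Suc (Suc i)" by (metis not0_implies_Suc)
      thus ?thesis
      proof cases
        case 1 thus ?thesis by (simp add: T_def op_weighted_shift_def)
      next
        case 2 thus ?thesis by (simp add: T_def op_weighted_shift_def x_def)
      next
        case 3
        have "T x j = A (Suc i) (x (Suc i)) + t *\<^sub>R A (Suc i) (A i (x i))"
          by (simp add: 3 T_def op_weighted_shift_def lam_def of_real_scaleC)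
        thus ?thesis using e1 e2 by (auto simp: 3 x_def B_def C_def E_def F_def)
      qed
    qed
    have Sf: "S x j = A j (x (Suc j)) + t *\<^sub>R A j (A (Suc j) (x (Suc (Suc j))))" for j
      by (simp add: S_def Wsh_def lam_def of_real_scaleC)
    have Sv0: "S x n = t *\<^sub>R B (B a)"
      using e1 e2 unfolding Sf by (simp add: x_def B_def)
    have Sv1: "S x (Suc n) = B a - (t * t) *\<^sub>R B (B (B a))"
      using e1 e2 unfolding Sf by (simp add: x_def B_def)
    have Sv2: "S x (Suc (Suc n)) = (t * t * t) *\<^sub>R B (C (C (B a))) - t *\<^sub>R B (B a)"
      using e1 e2 unfolding Sf by (simp add: x_def B_def C_def algebra_simps)
    have Sv3: "S x (Suc (Suc (Suc n))) = (t * t) *\<^sub>R C (C (B a))"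
      using e1 e2 unfolding Sf by (simp add: x_def B_def C_def)
    have Tx2: "T x \<in> ell2" and Sx2: "S x \<in> ell2" using adj x2 by (auto simp: adjpair_def)
    define b1 where "b1 = B a"
    define b2 where "b2 = B b1"
    define b3 where "b3 = B b2"
    define c2 where "c2 = C (C b1)"
    define bc2 where "bc2 = B c2"
    define f where "f = F (E (C b1))"
    have sumT: "(\<Sum>j. (norm (T x j))\<^sup>2) = (norm b1)\<^sup>2 + t^6 * (norm f)\<^sup>2"
    proof -
      have "(\<Sum>j. (norm (T x j))\<^sup>2) = (\<Sum>j\<in>{Suc (Suc (Suc n)), Suc (Suc (Suc (Suc (Suc (Suc n)))))}. (norm (T x j))\<^sup>2)"
        by (rule suminf_finite) (auto simp: Tv)
      also have "\<dots> = (norm b1)\<^sup>2 + t^6 * (norm f)\<^sup>2"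
        by (simp add: Tv b1_def f_def power_mult_distrib)
      finally show ?thesis .
    qed
    have sumS: "(\<Sum>j\<in>{n, Suc n, Suc (Suc n), Suc (Suc (Suc n))}. (norm (S x j))\<^sup>2) \<le> (\<Sum>j. (norm (S x j))\<^sup>2)"
      by (rule sum_le_suminf) (use Sx2 in \<open>auto simp: ell2_iff\<close>)
    have sumS2: "(\<Sum>j\<in>{n, Suc n, Suc (Suc n), Suc (Suc (Suc n))}. (norm (S x j))\<^sup>2) =
       (norm (t *\<^sub>R b2))\<^sup>2 + (norm (b1 - (t * t) *\<^sub>R b3))\<^sup>2 + (norm ((t * t * t) *\<^sub>R bc2 - t *\<^sub>R b2))\<^sup>2
        + (norm ((t * t) *\<^sub>R c2))\<^sup>2"
      by (simp add: Sv0 Sv1 Sv2 Sv3 b1_def b2_def b3_def c2_def bc2_def)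
    have sa: "cinner (A k u) v = cinner u (A k v)" for k u v by (rule pos_selfadj[OF pos])
    have r1: "Re (cinner b1 b3) = (norm b2)\<^sup>2"
      by (simp add: b3_def b2_def B_def sa norm_sq_cinner)
    have r2: "Re (cinner bc2 b2) = Re (cinner c2 b3)"
      by (simp add: bc2_def b2_def b3_def B_def sa)
    have N0: "(norm (t *\<^sub>R b2))\<^sup>2 = t\<^sup>2 * (norm b2)\<^sup>2" by (simp add: power_mult_distrib)
    have N1: "(norm (b1 - (t * t) *\<^sub>R b3))\<^sup>2 = (norm b1)\<^sup>2 + t^4 * (norm b3)\<^sup>2 - 2 * t\<^sup>2 * (norm b2)\<^sup>2"
      by (simp add: norm_diff_sq cinner_scaleR_right r1 power_mult_distrib) (simp add: power2_eq_square power4_eq_xxxx)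
    have N2: "(norm ((t * t * t) *\<^sub>R bc2 - t *\<^sub>R b2))\<^sup>2 = t^6 * (norm bc2)\<^sup>2 + t\<^sup>2 * (norm b2)\<^sup>2 - 2 * t^4 * Re (cinner c2 b3)"
      by (simp add: norm_diff_sq cinner_scaleR_right cinner_scaleR_left r2 power_mult_distrib)
        (simp add: power2_eq_square power4_eq_xxxx power_def)
    have N3: "(norm ((t * t) *\<^sub>R c2))\<^sup>2 = t^4 * (norm c2)\<^sup>2"
      by (simp add: power_mult_distrib)
    have Dx: "(norm (b3 - c2))\<^sup>2 = (norm b3)\<^sup>2 + (norm c2)\<^sup>2 - 2 * Re (cinner c2 b3)"
      by (simp add: norm_diff_sq Re_cinner_commute[of b3])
    have "(norm b1)\<^sup>2 + t^4 * (norm (b3 - c2))\<^sup>2 + t^6 * (norm bc2)\<^sup>2 \<le> (norm b1)\<^sup>2 + t^6 * (norm f)\<^sup>2"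
    proof -
      have "(norm b1)\<^sup>2 + t^4 * (norm (b3 - c2))\<^sup>2 + t^6 * (norm bc2)\<^sup>2 =
         (norm (t *\<^sub>R b2))\<^sup>2 + (norm (b1 - (t * t) *\<^sub>R b3))\<^sup>2 + (norm ((t * t * t) *\<^sub>R bc2 - t *\<^sub>R b2))\<^sup>2
        + (norm ((t * t) *\<^sub>R c2))\<^sup>2"
        unfolding N0 N1 N2 N3 Dx by (simp add: algebra_simps)
      thus ?thesis using sumS sumS2 sumT ineq by linarith
    qed
    moreover have "0 \<le> t^6 * (norm bc2)\<^sup>2" by simp
    moreover have e6: "t^4 * (t\<^sup>2 * (norm f)\<^sup>2) = t^6 * (norm f)\<^sup>2"
      by (simp add: mult.assoc[symmetric] power_add[symmetric])
    ultimately have "t^4 * (norm (b3 - c2))\<^sup>2 \<le> t^4 * (t\<^sup>2 * (norm f)\<^sup>2)" by linarith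
    hence "(norm (b3 - c2))\<^sup>2 \<le> t\<^sup>2 * (norm f)\<^sup>2"
      by (rule mult_left_le_imp_le) (use t in simp)
    thus ?thesis by (simp add: b1_def b2_def b3_def c2_def f_def)
  qed
  have z: "B (B (B a)) = C (C (B a))" for a
  proof -
    have "(norm (B (B (B a)) - C (C (B a))))\<^sup>2 \<le> 0"
      by (rule small_le[of _ "(norm (F (E (C (B a)))))\<^sup>2"]) (rule key)
    thus ?thesis by simp
  qed
  obtain Bi where Bi: "\<forall>x. B (Bi x) = x" using inv[of n] by (auto simp: invertible_op_def B_def)
  have "B (B w) = C (C w)" for w using z[of "Bi w"] Bi by simp
  hence "B = C" using sqrt_unique[of B C] pos inv by (simp add: B_def C_def)
  thus ?thesis by (simp add: B_def C_def)
qed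

lemma backward_step:
  fixes A :: "nat \<Rightarrow> 'h::complex_inner \<Rightarrow> 'h"
  assumes pos: "\<And>k. positive_op (A k)" and inv: "\<And>k. invertible_op (A k)"
    and M: "\<And>k x. norm (A k x) \<le> M * norm x" "0 \<le> M"
    and hyp: "\<And>lam. l2_hyponormal (\<lambda>x n. op_weighted_shift A x n + lam *\<^sub>C op_weighted_shift A (op_weighted_shift A x) n)"
    and e1: "A (Suc (Suc (Suc q))) = A (Suc (Suc q))" and e2: "A (Suc (Suc (Suc (Suc q)))) = A (Suc (Suc q))"
  shows "A (Suc q) = A (Suc (Suc q))"
proof -
  define B where "B = A (Suc (Suc q))"
  define P where "P = A (Suc q)"
  define Z where "Z = A q"
  have bl: "bounded_clinear (A k)" for k using pos[of k] by (rule pos_bcl)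
  have lin[simp]: "A k (v + w) = A k v + A k w" "A k (r *\<^sub>R v) = r *\<^sub>R A k v" "A k 0 = 0"
      "A k (- v) = - A k v" "A k (v - w) = A k v - A k w" for k v w r
    using bl[of k] by (simp_all add: bcl_add bcl_scaleR bcl_zero bcl_minus bcl_diff)
  obtain Pi where Pi: "\<forall>x. P (Pi x) = x" using inv[of "Suc q"] by (auto simp: invertible_op_def P_def)
  have key: "(norm (Z (Pi (B (B (B v)))) - Z (P (B v))))\<^sup>2 \<le> t\<^sup>2 * (norm (B (B (B (B v)))))\<^sup>2" if t: "t > 0" for t v
  proof -
    define u where "u = Pi (B (B (B v)))"
    have Pu: "P u = B (B (B v))" by (simp add: u_def Pi)
    define lam where "lam = complex_of_real t"
    define T where "T = (\<lambda>x n. op_weighted_shift A x n + lam *\<^sub>C op_weighted_shift A (op_weighted_shift A x) n)"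
    define S where "S = (\<lambda>y n. Wsh A y n + cnj lam *\<^sub>C Wsh A (Wsh A y) n)"
    define x where "x = (\<lambda>k. if k = Suc q then (t * t) *\<^sub>R u else if k = Suc (Suc q) then (- t) *\<^sub>R B v
       else if k = Suc (Suc (Suc q)) then v else 0)"
    have adj: "adjpair T S" unfolding T_def S_def by (rule T_adj[OF pos M])
    have x2: "x \<in> ell2"
      by (rule ell2_fin[of "{Suc q, Suc (Suc q), Suc (Suc (Suc q))}"]) (auto simp: x_def)
    have ineq: "(\<Sum>j. (norm (S x j))\<^sup>2) \<le> (\<Sum>j. (norm (T x j))\<^sup>2)"
      using hyp_ineq[OF adj _ x2] hyp unfolding T_def by blast
    define b1 where "b1 = B v"
    define b2 where "b2 = B b1"
    define b3 where "b3 = B b2"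
    define b4 where "b4 = B b3"
    have Tv: "T x j = (if j = Suc (Suc q) then (t * t) *\<^sub>R b3
        else if j = Suc (Suc (Suc q)) then (t * t * t) *\<^sub>R b4 - t *\<^sub>R b2
        else if j = Suc (Suc (Suc (Suc q))) then b1 - (t * t) *\<^sub>R b3
        else if j = Suc (Suc (Suc (Suc (Suc q)))) then t *\<^sub>R b2 else 0)" for j
    proof -
      consider "j = 0" | "j = Suc 0" | i where "j = Suc (Suc i)" by (metis not0_implies_Suc)
      thus ?thesis
      proof cases
        case 1 thus ?thesis by (simp add: T_def op_weighted_shift_def)
      next
        case 2 thus ?thesis by (simp add: T_def op_weighted_shift_def x_def)
      next
        case 3
        have "T x j = A (Suc i) (x (Suc i)) + t *\<^sub>R A (Suc i) (A i (x i))"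
          by (simp add: 3 T_def op_weighted_shift_def lam_def of_real_scaleC)
        thus ?thesis using e1 e2 Pu
          by (auto simp: 3 x_def B_def P_def b1_def b2_def b3_def b4_def algebra_simps)
      qed
    qed
    have Sf: "S x j = A j (x (Suc j)) + t *\<^sub>R A j (A (Suc j) (x (Suc (Suc j))))" for j
      by (simp add: S_def Wsh_def lam_def of_real_scaleC)
    have Sv0: "S x q = (t * t) *\<^sub>R (Z u - Z (P b1))"
      unfolding Sf by (simp add: x_def Z_def P_def B_def b1_def algebra_simps)
    have Sv2: "S x (Suc (Suc q)) = b1"
      unfolding Sf by (simp add: x_def B_def b1_def)
    have Tx2: "T x \<in> ell2" and Sx2: "S x \<in> ell2" using adj x2 by (auto simp: adjpair_def)
    define g where "g = Z u - Z (P b1)"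
    have sumT: "(\<Sum>j. (norm (T x j))\<^sup>2) = (norm ((t * t) *\<^sub>R b3))\<^sup>2 + (norm ((t * t * t) *\<^sub>R b4 - t *\<^sub>R b2))\<^sup>2
        + (norm (b1 - (t * t) *\<^sub>R b3))\<^sup>2 + (norm (t *\<^sub>R b2))\<^sup>2"
    proof -
      have "(\<Sum>j. (norm (T x j))\<^sup>2) = (\<Sum>j\<in>{Suc (Suc q), Suc (Suc (Suc q)), Suc (Suc (Suc (Suc q))), Suc (Suc (Suc (Suc (Suc q))))}. (norm (T x j))\<^sup>2)"
        by (rule suminf_finite) (auto simp: Tv)
      also have "\<dots> = (norm ((t * t) *\<^sub>R b3))\<^sup>2 + (norm ((t * t * t) *\<^sub>R b4 - t *\<^sub>R b2))\<^sup>2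
        + (norm (b1 - (t * t) *\<^sub>R b3))\<^sup>2 + (norm (t *\<^sub>R b2))\<^sup>2"
        by (simp add: Tv)
      finally show ?thesis .
    qed
    have sumS: "(\<Sum>j\<in>{q, Suc (Suc q)}. (norm (S x j))\<^sup>2) \<le> (\<Sum>j. (norm (S x j))\<^sup>2)"
      by (rule sum_le_suminf) (use Sx2 in \<open>auto simp: ell2_iff\<close>)
    have sumS2: "(\<Sum>j\<in>{q, Suc (Suc q)}. (norm (S x j))\<^sup>2) = t^4 * (norm g)\<^sup>2 + (norm b1)\<^sup>2"
      by (simp add: Sv0 Sv2 g_def power_mult_distrib)
    have sa: "cinner (A k w1) w2 = cinner w1 (A k w2)" for k w1 w2 by (rule pos_selfadj[OF pos])
    have r1: "Re (cinner b1 b3) = (norm b2)\<^sup>2"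
      by (simp add: b3_def b2_def B_def sa norm_sq_cinner)
    have r2: "Re (cinner b4 b2) = (norm b3)\<^sup>2"
      by (simp add: b4_def b3_def b2_def B_def sa norm_sq_cinner)
    have N0: "(norm ((t * t) *\<^sub>R b3))\<^sup>2 = t^4 * (norm b3)\<^sup>2"
      by (simp add: power_mult_distrib)
    have N1: "(norm ((t * t * t) *\<^sub>R b4 - t *\<^sub>R b2))\<^sup>2 = t^6 * (norm b4)\<^sup>2 + t\<^sup>2 * (norm b2)\<^sup>2 - 2 * t^4 * (norm b3)\<^sup>2"
      by (simp add: norm_diff_sq cinner_scaleR_right cinner_scaleR_left r2 power_mult_distrib)
        (simp add: power2_eq_square power4_eq_xxxx power_def)
    have N2: "(norm (b1 - (t * t) *\<^sub>R b3))\<^sup>2 = (norm b1)\<^sup>2 + t^4 * (norm b3)\<^sup>2 - 2 * t\<^sup>2 * (norm b2)\<^sup>2"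
      by (simp add: norm_diff_sq cinner_scaleR_right r1 power_mult_distrib) (simp add: power2_eq_square power4_eq_xxxx)
    have N3: "(norm (t *\<^sub>R b2))\<^sup>2 = t\<^sup>2 * (norm b2)\<^sup>2" by (simp add: power_mult_distrib)
    have "t^4 * (norm g)\<^sup>2 + (norm b1)\<^sup>2 \<le> (norm b1)\<^sup>2 + t^6 * (norm b4)\<^sup>2"
      using sumS sumS2 sumT ineq unfolding N0 N1 N2 N3 by linarith
    moreover have e6: "t^4 * (t\<^sup>2 * (norm b4)\<^sup>2) = t^6 * (norm b4)\<^sup>2"
      by (simp add: mult.assoc[symmetric] power_add[symmetric])
    ultimately have "t^4 * (norm g)\<^sup>2 \<le> t^4 * (t\<^sup>2 * (norm b4)\<^sup>2)" by linarith
    hence "(norm g)\<^sup>2 \<le> t\<^sup>2 * (norm b4)\<^sup>2"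
      by (rule mult_left_le_imp_le) (use t in simp)
    thus ?thesis by (simp add: g_def u_def b1_def b2_def b3_def b4_def)
  qed
  obtain Zi where Zi: "\<forall>x. Zi (Z x) = x" using inv[of q] by (auto simp: invertible_op_def Z_def)
  obtain Bi where Bi: "\<forall>x. B (Bi x) = x" using inv[of "Suc (Suc q)"] by (auto simp: invertible_op_def B_def)
  have z: "B (B (B v)) = P (P (B v))" for v
  proof -
    have "(norm (Z (Pi (B (B (B v)))) - Z (P (B v))))\<^sup>2 \<le> 0"
      by (rule small_le[of _ "(norm (B (B (B (B v)))))\<^sup>2"]) (rule key)
    hence "Z (Pi (B (B (B v)))) = Z (P (B v))" by simp
    hence "Pi (B (B (B v))) = P (B v)" using Zi by metis
    hence "P (Pi (B (B (B v)))) = P (P (B v))" by simp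
    thus ?thesis using Pi by simp
  qed
  have "B (B w) = P (P w)" for w using z[of "Bi w"] Bi by simp
  hence "B = P" using sqrt_unique[of B P] pos inv by (simp add: B_def P_def)
  thus ?thesis by (simp add: B_def P_def)
qed

theorem mainTheorem6:
  fixes A :: "nat \<Rightarrow> 'h::chilbert_space \<Rightarrow> 'h"
    and n :: nat
  assumes separable: "\<exists>D::'h set. countable D \<and> closure D = UNIV"
    and pos: "\<forall>k. positive_op (A k)"
    and inv: "\<forall>k. invertible_op (A k)"
    and bdd: "bdd_above (range (\<lambda>k. onorm (A k)))"
    and qh: "l2_quad_hyponormal (op_weighted_shift A)"
    and eq: "A n = A (n + 1)" "A (n + 1) = A (n + 2)"
  shows "\<forall>k\<ge>1. A k = A n"
proof -
  have pos': "\<And>k. positive_op (A k)" using pos by simp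
  have inv': "\<And>k. invertible_op (A k)" using inv by simp
  obtain M0 where M0: "\<And>k. onorm (A k) \<le> M0" using bdd by (auto simp: bdd_above_def)
  define M where "M = max M0 0"
  have M: "\<And>k x. norm (A k x) \<le> M * norm x" "0 \<le> M"
  proof -
    fix k x
    have "norm (A k x) \<le> onorm (A k) * norm x"
      by (rule onorm[OF bcl_bounded_linear[OF pos_bcl[OF pos']]])
    also have "\<dots> \<le> M * norm x" using M0[of k] by (intro mult_right_mono) (auto simp: M_def)
    finally show "norm (A k x) \<le> M * norm x" .
  qed (simp add: M_def)
  have hyp: "\<And>lam. l2_hyponormal (\<lambda>x n. op_weighted_shift A x n + lam *\<^sub>C op_weighted_shift A (op_weighted_shift A x) n)"
    using qh by (simp add: l2_quad_hyponormal_def)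
  have fw: "A (n + j) = A n \<and> A (Suc (n + j)) = A n \<and> A (Suc (Suc (n + j))) = A n" for j
  proof (induction j)
    case 0 thus ?case using eq by simp
  next
    case (Suc j)
    have "A (Suc (Suc (Suc (n + j)))) = A (n + j)"
      by (rule forward_step[OF pos' inv' M hyp]) (use Suc in auto)
    thus ?case using Suc by simp
  qed
  have bw: "i < n \<Longrightarrow> A (n - i) = A n \<and> A (Suc (n - i)) = A n \<and> A (Suc (Suc (n - i))) = A n" for i
  proof (induction i)
    case 0 thus ?case using eq by simp
  next
    case (Suc i)
    hence IH: "A (n - i) = A n \<and> A (Suc (n - i)) = A n \<and> A (Suc (Suc (n - i))) = A n" by simp
    define q where "q = n - i - 2"
    have m: "n - i = Suc (Suc q)" using Suc.prems by (simp add: q_def)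
    have "A (Suc q) = A (Suc (Suc q))"
      by (rule backward_step[OF pos' inv' M hyp]) (use IH m in auto)
    moreover have "n - Suc i = Suc q" using m by simp
    ultimately show ?case using IH m by simp
  qed
  show ?thesis
  proof (intro allI impI)
    fix k :: nat assume k: "k \<ge> 1"
    show "A k = A n"
    proof (cases "n \<le> k")
      case True
      then obtain j where "k = n + j" using le_Suc_ex by blast
      thus ?thesis using fw[of j] by simp
    next
      case False
      hence "n - k < n" "n - (n - k) = k" using k by auto
      thus ?thesis using bw[of "n - k"] by simp
    qed
  qed
qed

end
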